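(* Let $\mathcal{A}$ be a linear hyperplane arrangement in $\mathbb{R}^n$, $i\in\{0,\dots,k\}$, $P\in L(\mathcal{A}^{(k-i)})$ and $U\in\mathcal{S}_{i,P}$. Then $$L_U(\mathcal{A})=\{X\in L_{k-i}(\mathcal{A}):P\not\subseteq H(X)\},\qquad \{X\in L_{k-i}(\mathcal{A}):\Delta(U\cap(U^\perp+T^\perp))\in H(X)\}=\{X\in L_{k-i}(\mathcal{A}):P\subseteq H(X)\}.$$ In particular, $L_{U_1}(\mathcal{A})=L_{U_2}(\mathcal{A})$ for all $U_1,U_2\in\mathcal{S}_{i,P}$.
   Context: $T=\bigcap_{H\in\mathcal{A}}H$; $L(\mathcal{A})$ is the intersection lattice (incl. $\mathbb{R}^n$), $L_j(\mathcal{A})$ its elements of codimension $j$. Plücker coordinates $\Delta(W)=(\Delta_I(W))_{I\in\binom{[n]}{d}}$ for a $d$-dimensional $W$ ($\Delta_I$ = minor on columns $I$ of a row-basis matrix, up to scalar). For $X\in L_j(\mathcal{A})$, $H(X)=\{x\in\mathbb{R}^{\binom{[n]}{j}}:\sum_I(-1)^{j(j+1)/2+\sum_{i\in I}i}\Delta_{[n]\setminus I}(X)x_I=0\}$; $\mathcal{A}^{(j)}=\{H(X):X\in L_j(\mathcal{A})\}$. For a flat $P$ of an arrangement $\mathcal{B}$, $P^\circ=P\setminus\bigcup\{Q\in L(\mathcal{B}):Q\subsetneq P\}$. $\mathcal{S}_{i,P}=\{U\in\mathrm{Gr}(k,n):\dim(U\cap T)=i,\ \Delta(U\cap(U^\perp+T^\perp))\in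 P^\circ\}$. For $U$ with $\dim(U\cap T)=i$, $L_U(\mathcal{A})=\{X\in L_{k-i}(\mathcal{A}):X\oplus(U\cap(U^\perp+T^\perp))=\mathbb{R}^n\}$. *)

theory Defs
  imports "HOL-Analysis.Analysis"
begin

text \<open>Ambient space R^n is  real^'n  with  n = CARD('n); the coordinates are
  numbered 1..n according to the linear order on 'n.\<close>

definition pos :: "'n::{finite,linorder} \<Rightarrow> nat" where
  "pos i = card {j. j \<le> i}"

definition codim :: "(real^'n::{finite,linorder}) set \<Rightarrow> nat" where
  "codim X = CARD('n) - dim X"

definition linear_hyperplane :: "(real^'n::{finite,linorder}) set \<Rightarrow> bool" where
  "linear_hyperplane H \<longleftrightarrow> (\<exists>a. a \<noteq> 0 \<and> H = {x. a \<bullet> x = 0})"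

definition hyperplane_arrangement :: "(real^'n::{finite,linorder}) set set \<Rightarrow> bool" where
  "hyperplane_arrangement A \<longleftrightarrow> finite A \<and> (\<forall>H\<in>A. linear_hyperplane H)"

definition int_lattice :: "'a set \<Rightarrow> 'a set set \<Rightarrow> 'a set set" where
  "int_lattice V B = {V \<inter> \<Inter>S | S. S \<subseteq> B}"

definition flat_interior :: "'a set \<Rightarrow> 'a set set \<Rightarrow> 'a set \<Rightarrow> 'a set" where
  "flat_interior V B P = P - \<Union>{Q \<in> int_lattice V B. Q \<subset> P}"

definition Lj :: "(real^'n::{finite,linorder}) set set \<Rightarrow> nat \<Rightarrow> (real^'n::{finite,linorder}) set set" where
  "Lj A j = {X \<in> int_lattice UNIV A. codim X = j}"

text \<open>Coordinate space R^(binom([n],j)): functions on subsets of the index type,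
  vanishing outside the j-element subsets.\<close>
definition coord_space :: "nat \<Rightarrow> ('n::{finite,linorder} set \<Rightarrow> real) set" where
  "coord_space j = {x. \<forall>I. card I \<noteq> j \<longrightarrow> x I = 0}"

text \<open>Minor of the (d x n) matrix with rows bs, on the columns I (in increasing order).\<close>
definition minor :: "(real^'n::{finite,linorder}) list \<Rightarrow> 'n set \<Rightarrow> real" where
  "minor bs I = (let d = length bs; cs = sorted_list_of_set I in
      (\<Sum>p | p permutes {0..<d}. of_int (sign p) * (\<Prod>r<d. (bs ! r) $ (cs ! p r))))"

definition pluecker :: "(real^'n::{finite,linorder}) set \<Rightarrow> ('n set \<Rightarrow> real)" where
  "pluecker W = (let bs = (SOME bs. length bs = dim W \<and> distinct bs \<and>
                         independent (set bs) \<and> span (set bs) = W)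
                 in (\<lambda>I. if card I = dim W then minor bs I else 0))"

definition HX :: "(real^'n::{finite,linorder}) set \<Rightarrow> ('n set \<Rightarrow> real) set" where
  "HX X = (let j = codim X in
     {x \<in> coord_space j.
        (\<Sum>I | card I = j. (-1::real) ^ (j * (j + 1) div 2 + (\<Sum>i\<in>I. pos i))
                             * pluecker X (UNIV - I) * x I) = 0})"


definition arr_j :: "(real^'n::{finite,linorder}) set set \<Rightarrow> nat \<Rightarrow> ('n set \<Rightarrow> real) set set" where
  "arr_j A j = HX ` Lj A j"

definition Tset :: "(real^'n::{finite,linorder}) set set \<Rightarrow> (real^'n::{finite,linorder}) set" where
  "Tset A = \<Inter>A"

definition Wsp :: "(real^'n::{finite,linorder}) set set \<Rightarrow> (real^'n::{finite,linorder}) set \<Rightarrow> (real^'n::{finite,linorder}) set" where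
  "Wsp A U = U \<inter> {x + y | x y. x \<in> orthogonal_comp U \<and> y \<in> orthogonal_comp (Tset A)}"

definition S_set :: "(real^'n::{finite,linorder}) set set \<Rightarrow> nat \<Rightarrow> nat
                     \<Rightarrow> ('n set \<Rightarrow> real) set \<Rightarrow> (real^'n::{finite,linorder}) set set" where
  "S_set A k i P = {U. subspace U \<and> dim U = k \<and> dim (U \<inter> Tset A) = i \<and>
      pluecker (Wsp A U) \<in> flat_interior (coord_space (k - i)) (arr_j A (k - i)) P}"

definition direct_sum_full :: "(real^'n::{finite,linorder}) set \<Rightarrow> (real^'n::{finite,linorder}) set \<Rightarrow> bool" where
  "direct_sum_full X W \<longleftrightarrow> {x + y | x y. x \<in> X \<and> y \<in> W} = UNIV \<and> X \<inter> W = {0}"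

definition LU :: "(real^'n::{finite,linorder}) set set \<Rightarrow> nat \<Rightarrow> (real^'n::{finite,linorder}) set \<Rightarrow> (real^'n::{finite,linorder}) set set" where
  "LU A k U = {X \<in> Lj A (k - dim (U \<inter> Tset A)). direct_sum_full X (Wsp A U)}"

end

theory Submission
  imports Defs "Jordan_Normal_Form.Determinant"
begin


definition idx :: "'a::linorder set \<Rightarrow> 'a \<Rightarrow> nat" where
  "idx S s = card {t\<in>S. t < s}"

lemma strict_sorted_idx:
  fixes xs :: "'a::linorder list"
  assumes "sorted_wrt (<) xs" "c < length xs"
  shows "card {t\<in>set xs. t < xs!c} = c"
proof -
  have d: "distinct xs" using assms(1) strict_sorted_iff by blast
  have "{t\<in>set xs. t < xs!c} = (\<lambda>d. xs!d) ` {..<c}"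
  proof safe
    fix t assume "t \<in> set xs" "t < xs!c"
    then obtain d where dd: "d < length xs" "t = xs!d" by (auto simp: in_set_conv_nth)
    have "d < c"
    proof (rule ccontr)
      assume "\<not> d < c"
      hence "c = d \<or> c < d" by auto
      thus False using \<open>t < xs!c\<close> dd assms sorted_wrt_nth_less[OF assms(1), of c d] by auto
    qed
    thus "t \<in> (\<lambda>d. xs!d) ` {..<c}" using dd by auto
  next
    fix d assume "d < c" thus "xs ! d \<in> set xs" using assms by auto
  next
    fix d assume "d < c" thus "xs ! d < xs ! c" using assms sorted_wrt_nth_less by blast
  qed
  moreover have "inj_on (\<lambda>d. xs!d) {..<c}" using d assms(2)
    by (auto simp: inj_on_def nth_eq_iff_index_eq)
  ultimately show ?thesis by (simp add: card_image)
qed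

lemma idx_sorted_nth:
  assumes "finite S" "c < card S"
  shows "idx S (sorted_list_of_set S ! c) = c"
  using strict_sorted_idx[of "sorted_list_of_set S" c] assms
  by (simp add: idx_def)

lemma sorted_nth_idx:
  assumes "finite S" "s \<in> S"
  shows "sorted_list_of_set S ! idx S s = s" "idx S s < card S"
proof -
  obtain c where c: "c < card S" "sorted_list_of_set S ! c = s"
    using assms by (metis in_set_conv_nth length_sorted_list_of_set set_sorted_list_of_set)
  thus "sorted_list_of_set S ! idx S s = s" "idx S s < card S" using idx_sorted_nth[OF assms(1) c(1)] by auto
qed

lemma bij_sorted_nth:
  assumes "finite S"
  shows "bij_betw (\<lambda>c. sorted_list_of_set S ! c) {..<card S} S"
  unfolding bij_betw_def
proof
  show "inj_on (\<lambda>c. sorted_list_of_set S ! c) {..<card S}"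
    by (auto simp: inj_on_def nth_eq_iff_index_eq assms)
  show "(\<lambda>c. sorted_list_of_set S ! c) ` {..<card S} = S"
  proof -
    have "(\<lambda>c. sorted_list_of_set S ! c) ` {..<length (sorted_list_of_set S)} = set (sorted_list_of_set S)"
      by (metis atLeast_upt image_set map_nth)
    thus ?thesis using assms by simp
  qed
qed

lemma remove1_nth:
  assumes "distinct xs" "c < length xs"
  shows "remove1 (xs!c) xs = take c xs @ drop (Suc c) xs"
  using assms
proof (induction xs arbitrary: c)
  case Nil thus ?case by simp
next
  case (Cons a xs)
  show ?case
  proof (cases c)
    case 0 thus ?thesis by simp
  next
    case (Suc c')
    hence "a \<noteq> xs ! c'" using Cons.prems by auto
    thus ?thesis using Cons Suc by auto
  qed
qed

lemma take_drop_nth: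
  assumes "c < length xs" "j' < length xs - 1"
  shows "(take c xs @ drop (Suc c) xs) ! j' = xs ! (if j' < c then j' else Suc j')"
proof (cases "j' < c")
  case True
  thus ?thesis using assms by (simp add: nth_append)
next
  case False
  hence "(take c xs @ drop (Suc c) xs) ! j' = drop (Suc c) xs ! (j' - c)"
    using assms by (simp add: nth_append)
  also have "\<dots> = xs ! (Suc j')" using assms False by (simp add: nth_drop)
  finally show ?thesis using False by simp
qed

lemma sorted_remove_nth:
  assumes "finite S" "c < card S" "j' < card S - 1"
  shows "sorted_list_of_set (S - {sorted_list_of_set S ! c}) ! j'
       = sorted_list_of_set S ! (if j' < c then j' else Suc j')"
proof -
  let ?cs = "sorted_list_of_set S"
  have e: "sorted_list_of_set (S - {?cs ! c}) = take c ?cs @ drop (Suc c) ?cs"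
    using assms by (simp add: sorted_list_of_set_remove remove1_nth)
  show ?thesis unfolding e by (rule take_drop_nth) (use assms in simp_all)
qed


definition Mt :: "(real^'n::{finite,linorder}) list \<Rightarrow> 'n set \<Rightarrow> real Matrix.mat" where
  "Mt bs S = Matrix.mat (length bs) (length bs) (\<lambda>(r,c). bs ! r $ (sorted_list_of_set S ! c))"

lemma minor_det: "minor bs I = Determinant.det (Mt bs I)"
  unfolding minor_def Determinant.det_def Mt_def Let_def
  by (simp add: atLeast0LessThan)

lemma Mt_carrier: "Mt bs S \<in> carrier_mat (length bs) (length bs)"
  by (simp add: Mt_def)

lemma mat_delete_Mt:
  fixes S :: "'n::{finite,linorder} set"
  assumes "card S = Suc (length L)" "c < card S"
  shows "mat_delete (Mt (w#L) S) 0 c = Mt L (S - {sorted_list_of_set S ! c})"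
proof (rule eq_matI)
  fix i j assume ij: "i < dim_row (Mt L (S - {sorted_list_of_set S ! c}))"
     "j < dim_col (Mt L (S - {sorted_list_of_set S ! c}))"
  hence "j < card S - 1" using assms by (simp add: Mt_def)
  note sr = sorted_remove_nth[OF finite assms(2) this]
  show "mat_delete (Mt (w#L) S) 0 c $$ (i, j) = Mt L (S - {sorted_list_of_set S ! c}) $$ (i, j)"
    using ij assms unfolding mat_delete_def Mt_def by (simp add: sr)
qed (simp_all add: Mt_def mat_delete_def)

lemma row0:
  fixes S :: "'n::{finite,linorder} set"
  assumes "card S = Suc (length L)"
  shows "Determinant.det (Mt (w#L) S) = (\<Sum>s\<in>S. (-1)^(idx S s) * w $ s * Determinant.det (Mt L (S - {s})))"
proof -
  let ?cs = "sorted_list_of_set S"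
  have "Determinant.det (Mt (w#L) S) = (\<Sum>c<card S. Mt (w#L) S $$ (0,c) * cofactor (Mt (w#L) S) 0 c)"
    using laplace_expansion_row[OF Mt_carrier[of "w#L" S], of 0] assms by simp
  also have "\<dots> = (\<Sum>c<card S. (-1)^(idx S (?cs!c)) * w $ (?cs!c) * Determinant.det (Mt L (S - {?cs!c})))"
  proof (rule sum.cong[OF refl])
    fix c assume c: "c \<in> {..<card S}"
    hence "idx S (?cs!c) = c" using idx_sorted_nth[OF finite] by auto
    thus "Mt (w#L) S $$ (0,c) * cofactor (Mt (w#L) S) 0 c = (-1)^(idx S (?cs!c)) * w $ (?cs!c) * Determinant.det (Mt L (S - {?cs!c}))"
      using c assms unfolding cofactor_def by (simp add: mat_delete_Mt, simp add: Mt_def)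
  qed
  also have "\<dots> = (\<Sum>s\<in>S. (-1)^(idx S s) * w $ s * Determinant.det (Mt L (S - {s})))"
    by (rule sum.reindex_bij_betw[OF bij_sorted_nth]) simp
  finally show ?thesis .
qed


definition lapl_exp :: "'a::linorder set \<Rightarrow> 'a set \<Rightarrow> nat" where
  "lapl_exp S I = (\<Sum>i\<in>I. idx S i) + card I * (card I - 1) div 2"

lemma idx_remove:
  assumes "finite S" "i \<noteq> s" "s \<in> S"
  shows "idx S i = idx (S - {s}) i + (if s < i then 1 else 0)"
proof (cases "s < i")
  case True
  have "{t\<in>S. t < i} = insert s {t\<in>S - {s}. t < i}" using True assms by auto
  moreover have "finite {t\<in>S - {s}. t < i}" using assms by simp
  ultimately show ?thesis using True unfolding idx_def by simp
next
  case False
  have "{t\<in>S. t < i} = {t\<in>S - {s}. t < i}" using False assms by auto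
  thus ?thesis using False unfolding idx_def by simp
qed

lemma sign_exp:
  assumes "finite S" "s \<in> S" "I \<subseteq> S - {s}"
  shows "lapl_exp S (insert s I) + idx (insert s I) s = idx S s + lapl_exp (S - {s}) I + 2 * card I"
proof -
  have fI: "finite I" using assms finite_subset by blast
  have sI: "s \<notin> I" using assms by auto
  define g where "g = card {i\<in>I. s < i}"
  have a: "(\<Sum>i\<in>I. idx S i) = (\<Sum>i\<in>I. idx (S - {s}) i) + g"
  proof -
    have "(\<Sum>i\<in>I. idx S i) = (\<Sum>i\<in>I. idx (S - {s}) i + (if s < i then 1 else 0))"
    proof (rule sum.cong[OF refl])
      fix i assume "i \<in> I"
      hence "i \<noteq> s" using assms by auto
      thus "idx S i = idx (S - {s}) i + (if s < i then 1 else 0)" using idx_remove assms by blast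
    qed
    also have "\<dots> = (\<Sum>i\<in>I. idx (S - {s}) i) + (\<Sum>i\<in>I. (if s < i then 1 else 0))"
      by (simp add: sum.distrib)
    also have "(\<Sum>i\<in>I. (if s < i then 1 else 0)) = g"
      unfolding g_def using sum.inter_filter[OF fI, of "\<lambda>_. (1::nat)" "\<lambda>i. s < i"] by simp
    finally show ?thesis .
  qed
  have b: "idx (insert s I) s + g = card I"
  proof -
    have "{t\<in>insert s I. t < s} = {i\<in>I. i < s}" by auto
    hence "idx (insert s I) s = card {i\<in>I. i < s}" unfolding idx_def by simp
    moreover have "I = {i\<in>I. i < s} \<union> {i\<in>I. s < i}" using sI by (auto, metis linorder_neqE)
    hence "card I = card {i\<in>I. i < s} + card {i\<in>I. s < i}"
      using fI by (metis (no_types, lifting) card_Un_disjoint disjoint_iff finite_Un less_asym mem_Collect_eq)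
    ultimately show ?thesis unfolding g_def by simp
  qed
  have c: "Suc (card I) * (Suc (card I) - 1) div 2 = card I * (card I - 1) div 2 + card I"
  proof -
    have "Suc (card I) * (Suc (card I) - 1) = card I * (card I - 1) + 2 * card I"
      by (cases "card I") (simp_all add: algebra_simps)
    thus ?thesis by simp
  qed
  have "lapl_exp S (insert s I) = (\<Sum>i\<in>I. idx S i) + idx S s + card I * (card I - 1) div 2 + card I"
    unfolding lapl_exp_def using fI sI c by simp
  thus ?thesis unfolding lapl_exp_def using a b by simp
qed

lemma sign_eq:
  assumes "finite S" "s \<in> S" "I \<subseteq> S - {s}"
  shows "(-1::real)^(lapl_exp S (insert s I)) * (-1)^(idx (insert s I) s) = (-1)^(idx S s) * (-1)^(lapl_exp (S - {s}) I)"
proof -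
  have "(-1::real)^(lapl_exp S (insert s I)) * (-1)^(idx (insert s I) s) = (-1)^(lapl_exp S (insert s I) + idx (insert s I) s)"
    by (simp add: power_add)
  also have "\<dots> = (-1)^(idx S s + lapl_exp (S - {s}) I) * ((-1)^2)^(card I)"
    unfolding sign_exp[OF assms] power_add power_mult by simp
  also have "\<dots> = (-1)^(idx S s) * (-1)^(lapl_exp (S - {s}) I)" by (simp add: power_add)
  finally show ?thesis .
qed

lemma det_Mt_Nil: "Determinant.det (Mt [] I) = 1"
  unfolding Determinant.det_def Mt_def by simp



lemma laplace:
  fixes S :: "'n::{finite,linorder} set"
  assumes "card S = length ws + length xs"
  shows "Determinant.det (Mt (ws @ xs) S) =
    (\<Sum>I\<in>{I. I \<subseteq> S \<and> card I = length ws}. (-1)^(lapl_exp S I) * Determinant.det (Mt ws I) * Determinant.det (Mt xs (S - I)))"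
  using assms
proof (induction ws arbitrary: S)
  case Nil
  have "{I. I \<subseteq> S \<and> card I = 0} = {{}}" using finite_subset[of _ S] by auto
  thus ?case by (simp add: det_Mt_Nil lapl_exp_def)
next
  case (Cons w ws)
  let ?D = "Determinant.det"
  let ?j = "length ws"
  define G where "G = (\<lambda>(s::'n, I). (-1::real)^(idx S s) * w $ s * ((-1)^(lapl_exp (S - {s}) I) * ?D (Mt ws I) * ?D (Mt xs (S - {s} - I))))"
  define H where "H = (\<lambda>(J, s::'n). (-1::real)^(lapl_exp S J) * ((-1)^(idx J s) * w $ s * ?D (Mt ws (J - {s}))) * ?D (Mt xs (S - J)))"
  have "?D (Mt ((w # ws) @ xs) S) = (\<Sum>s\<in>S. (-1)^(idx S s) * w $ s * ?D (Mt (ws @ xs) (S - {s})))"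
    using row0[of S "ws @ xs" w] Cons.prems by simp
  also have "\<dots> = (\<Sum>s\<in>S. \<Sum>I\<in>{I. I \<subseteq> S - {s} \<and> card I = ?j}. G (s, I))"
  proof (rule sum.cong[OF refl])
    fix s assume s: "s \<in> S"
    have "card (S - {s}) = length ws + length xs" using s Cons.prems by simp
    note IH = Cons.IH[OF this]
    show "(-1)^(idx S s) * w $ s * ?D (Mt (ws @ xs) (S - {s})) = (\<Sum>I\<in>{I. I \<subseteq> S - {s} \<and> card I = ?j}. G (s, I))"
      unfolding IH G_def by (simp add: sum_distrib_left mult.assoc)
  qed
  also have "\<dots> = (\<Sum>(s,I)\<in>Sigma S (\<lambda>s. {I. I \<subseteq> S - {s} \<and> card I = ?j}). G (s,I))"
    by (rule sum.Sigma) auto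
  also have "\<dots> = (\<Sum>p\<in>Sigma S (\<lambda>s. {I. I \<subseteq> S - {s} \<and> card I = ?j}). G p)"
    by simp
  also have "\<dots> = (\<Sum>p\<in>Sigma {J. J \<subseteq> S \<and> card J = Suc ?j} (\<lambda>J. J). H p)"
  proof (rule sum.reindex_bij_witness[where i = "\<lambda>(J, s). (s, J - {s})" and j = "\<lambda>(s, I). (insert s I, s)"])
    fix p assume "p \<in> Sigma S (\<lambda>s. {I. I \<subseteq> S - {s} \<and> card I = ?j})"
    then obtain s I where p: "p = (s, I)" "s \<in> S" "I \<subseteq> S - {s}" "card I = ?j" by auto
    have fI: "finite I" using finite by blast
    have sI: "s \<notin> I" using p by auto
    show "(case (case p of (s, I) \<Rightarrow> (insert s I, s)) of (J, s) \<Rightarrow> (s, J - {s})) = p"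
      using p sI by auto
    show "(case p of (s, I) \<Rightarrow> (insert s I, s)) \<in> Sigma {J. J \<subseteq> S \<and> card J = Suc ?j} (\<lambda>J. J)"
      using p sI fI by auto
    have e1: "insert s I - {s} = I" using sI by auto
    have e2: "S - insert s I = S - {s} - I" by auto
    have se: "(-1::real)^(lapl_exp S (insert s I)) * (-1)^(idx (insert s I) s) = (-1)^(idx S s) * (-1)^(lapl_exp (S - {s}) I)"
      using sign_eq[OF finite p(2,3)] .
    show "H (case p of (s, I) \<Rightarrow> (insert s I, s)) = G p"
      unfolding p H_def G_def using se e1 e2
      by (simp add: algebra_simps)
  next
    fix q assume "q \<in> Sigma {J. J \<subseteq> S \<and> card J = Suc ?j} (\<lambda>J. J)"
    then obtain J s where q: "q = (J, s)" "J \<subseteq> S" "card J = Suc ?j" "s \<in> J" by auto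
    have fJ: "finite J" using finite by blast
    show "(case (case q of (J, s) \<Rightarrow> (s, J - {s})) of (s, I) \<Rightarrow> (insert s I, s)) = q"
      using q by auto
    show "(case q of (J, s) \<Rightarrow> (s, J - {s})) \<in> Sigma S (\<lambda>s. {I. I \<subseteq> S - {s} \<and> card I = ?j})"
      using q fJ by auto
  qed
  also have "\<dots> = (\<Sum>(J,s)\<in>Sigma {J. J \<subseteq> S \<and> card J = Suc ?j} (\<lambda>J. J). H (J,s))"
    by simp
  also have "\<dots> = (\<Sum>J\<in>{J. J \<subseteq> S \<and> card J = Suc ?j}. \<Sum>s\<in>J. H (J, s))"
    by (rule sum.Sigma[symmetric]) auto
  also have "\<dots> = (\<Sum>J\<in>{J. J \<subseteq> S \<and> card J = length (w # ws)}. (-1)^(lapl_exp S J) * ?D (Mt (w # ws) J) * ?D (Mt xs (S - J)))"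
  proof (rule sum.cong)
    fix J assume "J \<in> {J. J \<subseteq> S \<and> card J = length (w # ws)}"
    hence "card J = Suc (length ws)" by simp
    note r = row0[OF this, of w]
    show "(\<Sum>s\<in>J. H (J, s)) = (-1)^(lapl_exp S J) * ?D (Mt (w # ws) J) * ?D (Mt xs (S - J))"
      unfolding r H_def by (simp add: sum_distrib_left sum_distrib_right)
  qed simp
  finally show ?case .
qed



lemma sum_lessThan_add_split:
  "(\<Sum>r<a + b. f r) = (\<Sum>r<a. f r) + (\<Sum>r<b. f (a + r))" for f :: "nat \<Rightarrow> 'a::comm_monoid_add"
  by (induction b) (simp_all add: add.assoc)

lemma sum_set_list:
  assumes "distinct bs"
  shows "(\<Sum>v\<in>set bs. f v) = (\<Sum>r<length bs. f (bs ! r))"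
  using sum.reindex_bij_betw[OF bij_betw_nth[OF assms refl refl], of f] by simp

lemma indep_list:
  fixes bs :: "('a::real_vector) list"
  assumes "distinct bs" "independent (set bs)" "(\<Sum>r<length bs. a r *\<^sub>R bs ! r) = 0" "r < length bs"
  shows "a r = 0"
proof -
  define u where "u v = a (SOME r. r < length bs \<and> bs ! r = v)" for v :: 'a
  have ur: "u (bs ! r) = a r" if "r < length bs" for r
  proof -
    have "(SOME r'. r' < length bs \<and> bs ! r' = bs ! r) = r"
      using that assms(1) by (rule_tac some_equality) (auto simp: nth_eq_iff_index_eq)
    thus ?thesis by (simp add: u_def)
  qed
  have "(\<Sum>v\<in>set bs. u v *\<^sub>R v) = (\<Sum>r<length bs. u (bs!r) *\<^sub>R bs ! r)"
    by (rule sum_set_list[OF assms(1)])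
  also have "\<dots> = (\<Sum>r<length bs. a r *\<^sub>R bs ! r)"
    by (rule sum.cong) (simp_all add: ur)
  finally have "(\<Sum>v\<in>set bs. u v *\<^sub>R v) = 0" using assms(3) by simp
  hence "\<forall>v\<in>set bs. u v = 0" using assms(2) dependent_finite[of "set bs"] by auto
  hence "u (bs ! r) = 0" using assms(4) by simp
  thus ?thesis by (simp add: ur assms(4))
qed

lemma span_list:
  fixes bs :: "('a::real_vector) list"
  assumes "distinct bs" "z \<in> span (set bs)"
  shows "\<exists>a. z = (\<Sum>r<length bs. a r *\<^sub>R bs ! r)"
proof -
  obtain u where "z = (\<Sum>v\<in>set bs. u v *\<^sub>R v)" using assms(2) span_finite[of "set bs"] by auto
  hence "z = (\<Sum>r<length bs. u (bs!r) *\<^sub>R bs ! r)" using sum_set_list[OF assms(1)] by simp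
  thus ?thesis by (intro exI[of _ "\<lambda>r. u (bs!r)"])
qed

lemma in_span_list:
  fixes bs :: "('a::real_vector) list"
  shows "(\<Sum>r<length bs. a r *\<^sub>R bs ! r) \<in> span (set bs)"
  by (intro span_sum span_mul span_base) simp

lemma basis_list:
  fixes W :: "('a::euclidean_space) set"
  assumes "subspace W"
  shows "\<exists>bs. length bs = dim W \<and> distinct bs \<and> independent (set bs) \<and> span (set bs) = W"
proof -
  obtain B where B: "B \<subseteq> W" "independent B" "W \<subseteq> span B" "card B = dim W"
    using basis_exists[of W] by blast
  have "finite B" using B(2) finiteI_independent by blast
  then obtain bs where bs: "set bs = B" "distinct bs" using finite_distinct_list by blast
  have "span B = W" using B assms span_minimal by blast
  moreover have "length bs = card B" using bs distinct_card by metis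
  ultimately show ?thesis using bs B by (intro exI[of _ bs]) auto
qed



lemma det_Mt_zero_iff:
  fixes L :: "(real^'n::{finite,linorder}) list"
  assumes "length L = CARD('n)"
  shows "Determinant.det (Mt L UNIV) = 0 \<longleftrightarrow> (\<exists>v. (\<exists>r<length L. v r \<noteq> 0) \<and> (\<Sum>r<length L. v r *\<^sub>R L!r) = 0)"
proof -
  let ?n = "CARD('n)"
  let ?M = "Mt L UNIV"
  let ?cs = "sorted_list_of_set (UNIV::'n set)"
  have M: "?M \<in> carrier_mat ?n ?n" using Mt_carrier assms by metis
  have "Determinant.det ?M = Determinant.det (transpose_mat ?M)" using det_transpose[OF M] by simp
  hence d0: "Determinant.det ?M = 0 \<longleftrightarrow> (\<exists>vv. vv \<in> carrier_vec ?n \<and> vv \<noteq> 0\<^sub>v ?n \<and> transpose_mat ?M *\<^sub>v vv = 0\<^sub>v ?n)"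
    using det_0_iff_vec_prod_zero_field[of "transpose_mat ?M" ?n] M by simp
  have key: "transpose_mat ?M *\<^sub>v vv = 0\<^sub>v ?n \<longleftrightarrow> (\<Sum>r<?n. (vv $ r) *\<^sub>R L!r) = 0"
    if vv: "vv \<in> carrier_vec ?n" for vv :: "real Matrix.vec"
  proof -
    have comp: "(transpose_mat ?M *\<^sub>v vv) $ c = (\<Sum>r<?n. (vv $ r) * (L!r $ (?cs!c)))" if "c < ?n" for c
      using that vv M
      by (simp add: Mt_def assms atLeast0LessThan mult.commute scalar_prod_def)
    have "transpose_mat ?M *\<^sub>v vv = 0\<^sub>v ?n \<longleftrightarrow> (\<forall>c<?n. (transpose_mat ?M *\<^sub>v vv) $ c = 0)"
      using M by (auto simp: vec_eq_iff)
    also have "\<dots> \<longleftrightarrow> (\<forall>c<?n. (\<Sum>r<?n. (vv $ r) * (L!r $ (?cs!c))) = 0)"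
      using comp by simp
    also have "\<dots> \<longleftrightarrow> (\<forall>k::'n. (\<Sum>r<?n. (vv $ r) * (L!r $ k)) = 0)"
    proof
      assume h: "\<forall>c<?n. (\<Sum>r<?n. (vv $ r) * (L!r $ (?cs!c))) = 0"
      show "\<forall>k::'n. (\<Sum>r<?n. (vv $ r) * (L!r $ k)) = 0"
      proof
        fix k :: 'n
        have "?cs ! idx UNIV k = k" "idx UNIV k < card (UNIV::'n set)"
          using sorted_nth_idx[of UNIV k] by auto
        thus "(\<Sum>r<?n. (vv $ r) * (L!r $ k)) = 0" using h by metis
      qed
    qed auto
    also have "\<dots> \<longleftrightarrow> (\<Sum>r<?n. (vv $ r) *\<^sub>R L!r) = 0"
      by (simp add: Finite_Cartesian_Product.vec_eq_iff sum_component)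
    finally show ?thesis .
  qed
  show ?thesis
  proof
    assume "Determinant.det ?M = 0"
    then obtain vv where vv: "vv \<in> carrier_vec ?n" "vv \<noteq> 0\<^sub>v ?n" "transpose_mat ?M *\<^sub>v vv = 0\<^sub>v ?n"
      using d0 by blast
    have "\<exists>r<?n. vv $ r \<noteq> 0"
    proof (rule ccontr)
      assume "\<not> (\<exists>r<?n. vv $ r \<noteq> 0)"
      hence "vv = 0\<^sub>v ?n" using vv(1) by (intro eq_vecI) auto
      thus False using vv(2) by simp
    qed
    thus "\<exists>v. (\<exists>r<length L. v r \<noteq> 0) \<and> (\<Sum>r<length L. v r *\<^sub>R L!r) = 0"
      using key[OF vv(1)] vv(3) assms by (intro exI[of _ "\<lambda>r. vv $ r"]) simp
  next
    assume "\<exists>v. (\<exists>r<length L. v r \<noteq> 0) \<and> (\<Sum>r<length L. v r *\<^sub>R L!r) = 0"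
    then obtain v r where v: "r < ?n" "v r \<noteq> 0" "(\<Sum>r<?n. v r *\<^sub>R L!r) = 0" using assms by auto
    let ?vv = "Matrix.vec ?n v"
    have c: "?vv \<in> carrier_vec ?n" by simp
    have "(\<Sum>r<?n. (?vv $ r) *\<^sub>R L!r) = 0" using v(3) by simp
    hence "transpose_mat ?M *\<^sub>v ?vv = 0\<^sub>v ?n" using key[OF c] by simp
    moreover have "?vv \<noteq> 0\<^sub>v ?n"
    proof
      assume "?vv = 0\<^sub>v ?n"
      hence "?vv $ r = 0\<^sub>v ?n $ r" by simp
      thus False using v by simp
    qed
    ultimately show "Determinant.det ?M = 0" using d0 c by blast
  qed
qed



lemma split_append_sum:
  fixes ws xs :: "('a::real_vector) list"
  shows "(\<Sum>r<length (ws@xs). v r *\<^sub>R (ws@xs)!r) = (\<Sum>r<length ws. v r *\<^sub>R ws!r) + (\<Sum>r<length xs. v (length ws + r) *\<^sub>R xs!r)"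
proof -
  have "(\<Sum>r<length (ws@xs). v r *\<^sub>R (ws@xs)!r) = (\<Sum>r<length ws. v r *\<^sub>R (ws@xs)!r) + (\<Sum>r<length xs. v (length ws + r) *\<^sub>R (ws@xs)!(length ws + r))"
    by (simp only: length_append sum_lessThan_add_split)
  also have "\<dots> = (\<Sum>r<length ws. v r *\<^sub>R ws!r) + (\<Sum>r<length xs. v (length ws + r) *\<^sub>R xs!r)"
    by (simp add: nth_append)
  finally show ?thesis .
qed

lemma transversal_iff:
  fixes ws xs :: "('a::real_vector) list"
  assumes "distinct ws" "independent (set ws)" "distinct xs" "independent (set xs)"
  shows "span (set xs) \<inter> span (set ws) = {0} \<longleftrightarrow>
    \<not> (\<exists>v. (\<exists>r<length (ws@xs). v r \<noteq> 0) \<and> (\<Sum>r<length (ws@xs). v r *\<^sub>R (ws@xs)!r) = 0)"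
proof
  assume tr: "span (set xs) \<inter> span (set ws) = {0}"
  show "\<not> (\<exists>v. (\<exists>r<length (ws@xs). v r \<noteq> 0) \<and> (\<Sum>r<length (ws@xs). v r *\<^sub>R (ws@xs)!r) = 0)"
  proof
    assume "\<exists>v. (\<exists>r<length (ws@xs). v r \<noteq> 0) \<and> (\<Sum>r<length (ws@xs). v r *\<^sub>R (ws@xs)!r) = 0"
    then obtain v r where v: "r < length (ws@xs)" "v r \<noteq> 0" "(\<Sum>r<length (ws@xs). v r *\<^sub>R (ws@xs)!r) = 0"
      by blast
    define z where "z = (\<Sum>r<length ws. v r *\<^sub>R ws!r)"
    have zx: "z = - (\<Sum>r<length xs. v (length ws + r) *\<^sub>R xs!r)"
      using v(3) split_append_sum[of v ws xs] unfolding z_def by (simp add: eq_neg_iff_add_eq_0)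
    have "z \<in> span (set ws)" unfolding z_def by (rule in_span_list)
    moreover have "z \<in> span (set xs)" unfolding zx by (intro span_neg in_span_list)
    ultimately have "z = 0" using tr by auto
    hence w0: "\<forall>r<length ws. v r = 0" using indep_list[OF assms(1,2)] unfolding z_def by blast
    have "(\<Sum>r<length xs. v (length ws + r) *\<^sub>R xs!r) = 0" using \<open>z = 0\<close> zx by simp
    hence x0: "\<forall>r<length xs. v (length ws + r) = 0" using indep_list[OF assms(3,4), of "\<lambda>r. v (length ws + r)"] by blast
    show False
    proof (cases "r < length ws")
      case True thus False using w0 v by auto
    next
      case False
      hence "r = length ws + (r - length ws)" "r - length ws < length xs" using v(1) by auto
      thus False using x0 v(2) by metis
    qed
  qed
next
  assume nd: "\<not> (\<exists>v. (\<exists>r<length (ws@xs). v r \<noteq> 0) \<and> (\<Sum>r<length (ws@xs). v r *\<^sub>R (ws@xs)!r) = 0)"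
  show "span (set xs) \<inter> span (set ws) = {0}"
  proof (rule ccontr)
    assume "span (set xs) \<inter> span (set ws) \<noteq> {0}"
    moreover have "0 \<in> span (set xs) \<inter> span (set ws)" by (simp add: span_zero)
    ultimately obtain z where z: "z \<in> span (set xs)" "z \<in> span (set ws)" "z \<noteq> 0" by blast
    obtain a where a: "z = (\<Sum>r<length ws. a r *\<^sub>R ws!r)" using span_list[OF assms(1) z(2)] by blast
    obtain b where b: "z = (\<Sum>r<length xs. b r *\<^sub>R xs!r)" using span_list[OF assms(3) z(1)] by blast
    define v where "v r = (if r < length ws then a r else - b (r - length ws))" for r
    have "(\<Sum>r<length (ws@xs). v r *\<^sub>R (ws@xs)!r) = (\<Sum>r<length ws. a r *\<^sub>R ws!r) + (\<Sum>r<length xs. (- b r) *\<^sub>R xs!r)"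
      unfolding split_append_sum v_def by simp
    also have "\<dots> = z - z" using a b by (simp add: sum_negf)
    finally have s0: "(\<Sum>r<length (ws@xs). v r *\<^sub>R (ws@xs)!r) = 0" by simp
    have "\<exists>r<length ws. a r \<noteq> 0"
    proof (rule ccontr)
      assume "\<not> (\<exists>r<length ws. a r \<noteq> 0)"
      hence "z = 0" unfolding a by simp
      thus False using z(3) by simp
    qed
    then obtain r where "r < length ws" "a r \<noteq> 0" by blast
    hence "r < length (ws@xs)" "v r \<noteq> 0" unfolding v_def by auto
    thus False using nd s0 by blast
  qed
qed



lemma subspace_Tset:
  assumes "hyperplane_arrangement A"
  shows "subspace (Tset A)"
  unfolding Tset_def
proof (rule subspace_Inter, intro ballI)
  fix H assume "H \<in> A"
  then obtain a where "H = {x. inner a x = 0}" using assms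
    unfolding hyperplane_arrangement_def linear_hyperplane_def by blast
  thus "subspace H" using subspace_hyperplane by simp
qed

lemma subspace_lattice:
  assumes "hyperplane_arrangement A" "X \<in> int_lattice UNIV A"
  shows "subspace X"
proof -
  obtain S where S: "S \<subseteq> A" "X = UNIV \<inter> \<Inter>S" using assms(2) unfolding int_lattice_def by blast
  have "subspace (\<Inter>S)"
  proof (rule subspace_Inter, intro ballI)
    fix H assume "H \<in> S"
    then obtain a where "H = {x. inner a x = 0}" using assms S
      unfolding hyperplane_arrangement_def linear_hyperplane_def by blast
    thus "subspace H" using subspace_hyperplane by simp
  qed
  thus ?thesis using S by simp
qed

lemma sum_orth_comp:
  fixes U T :: "('a::euclidean_space) set"
  assumes "subspace U" "subspace T"
  shows "{x + y | x y. x \<in> orthogonal_comp U \<and> y \<in> orthogonal_comp T} = orthogonal_comp (U \<inter> T)"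
proof -
  let ?S = "{x + y | x y. x \<in> orthogonal_comp U \<and> y \<in> orthogonal_comp T}"
  have sS: "subspace ?S" by (rule subspace_sums) (simp_all add: subspace_orthogonal_comp)
  have "orthogonal_comp ?S = U \<inter> T"
  proof
    show "orthogonal_comp ?S \<subseteq> U \<inter> T"
    proof
      fix z assume z: "z \<in> orthogonal_comp ?S"
      have "orthogonal_comp U \<subseteq> ?S"
      proof
        fix x assume "x \<in> orthogonal_comp U"
        moreover have "0 \<in> orthogonal_comp T" using subspace_orthogonal_comp subspace_0 by blast
        ultimately show "x \<in> ?S" by force
      qed
      moreover have "orthogonal_comp T \<subseteq> ?S"
      proof
        fix x assume "x \<in> orthogonal_comp T"
        moreover have "0 \<in> orthogonal_comp U" using subspace_orthogonal_comp subspace_0 by blast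
        ultimately show "x \<in> ?S" by force
      qed
      ultimately have "z \<in> orthogonal_comp (orthogonal_comp U)" "z \<in> orthogonal_comp (orthogonal_comp T)"
        using z orthogonal_comp_anti_mono by blast+
      thus "z \<in> U \<inter> T" using orthogonal_comp_self assms by blast
    qed
  next
    show "U \<inter> T \<subseteq> orthogonal_comp ?S"
    proof
      fix z assume z: "z \<in> U \<inter> T"
      show "z \<in> orthogonal_comp ?S"
        unfolding orthogonal_comp_def[of ?S]
      proof (intro CollectI ballI)
        fix w assume "w \<in> ?S"
        then obtain x y where w: "w = x + y" "x \<in> orthogonal_comp U" "y \<in> orthogonal_comp T" by blast
        hence "Linear_Algebra.orthogonal z x" "Linear_Algebra.orthogonal z y" using z unfolding orthogonal_comp_def by auto
        hence "inner x z = 0" "inner y z = 0" unfolding Linear_Algebra.orthogonal_def by (metis inner_commute)+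
        thus "Linear_Algebra.orthogonal w z" unfolding w Linear_Algebra.orthogonal_def by (simp add: inner_add_left)
      qed
    qed
  qed
  hence "orthogonal_comp (U \<inter> T) = orthogonal_comp (orthogonal_comp ?S)" by simp
  also have "\<dots> = ?S" using orthogonal_comp_self[OF sS] .
  finally show ?thesis by simp
qed

lemma Wsp_props:
  fixes U :: "(real^'n::{finite,linorder}) set"
  assumes "hyperplane_arrangement A" "subspace U"
  shows "subspace (Wsp A U)" "dim (Wsp A U) + dim (U \<inter> Tset A) = dim U"
proof -
  let ?T = "Tset A"
  let ?V = "U \<inter> ?T"
  have sT: "subspace ?T" by (rule subspace_Tset[OF assms(1)])
  have sV: "subspace ?V" using sT assms(2) subspace_inter by blast
  have W: "Wsp A U = U \<inter> orthogonal_comp ?V"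
    unfolding Wsp_def sum_orth_comp[OF assms(2) sT] ..
  show sW: "subspace (Wsp A U)" unfolding W using assms(2) subspace_orthogonal_comp subspace_inter by blast
  have int0: "?V \<inter> Wsp A U = {0}"
  proof
    show "?V \<inter> Wsp A U \<subseteq> {0}"
    proof
      fix z assume "z \<in> ?V \<inter> Wsp A U"
      hence "z \<in> ?V" "z \<in> orthogonal_comp ?V" unfolding W by auto
      hence "Linear_Algebra.orthogonal z z" unfolding orthogonal_comp_def by auto
      thus "z \<in> {0}" unfolding Linear_Algebra.orthogonal_def by simp
    qed
    show "{0} \<subseteq> ?V \<inter> Wsp A U" using sV sW subspace_0 by blast
  qed
  have sum: "{x + y |x y. x \<in> ?V \<and> y \<in> Wsp A U} = U"
  proof
    show "{x + y |x y. x \<in> ?V \<and> y \<in> Wsp A U} \<subseteq> U"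
      unfolding W using assms(2) subspace_add by blast
    show "U \<subseteq> {x + y |x y. x \<in> ?V \<and> y \<in> Wsp A U}"
    proof
      fix u assume u: "u \<in> U"
      have "u \<in> ?V + orthogonal_comp ?V" using subspace_sum_orthogonal_comp[OF sV] by simp
      then obtain a b where ab: "u = a + b" "a \<in> ?V" "b \<in> orthogonal_comp ?V" by (auto elim: set_plus_elim)
      have "b = u - a" using ab by simp
      hence "b \<in> U" using u ab(2) assms(2) subspace_diff by blast
      hence "b \<in> Wsp A U" unfolding W using ab by simp
      thus "u \<in> {x + y |x y. x \<in> ?V \<and> y \<in> Wsp A U}" using ab by blast
    qed
  qed
  have "dim {x + y |x y. x \<in> ?V \<and> y \<in> Wsp A U} + dim (?V \<inter> Wsp A U) = dim ?V + dim (Wsp A U)"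
    by (rule dim_sums_Int[OF sV sW])
  thus "dim (Wsp A U) + dim ?V = dim U" unfolding sum int0 by simp
qed

lemma direct_sum_iff:
  fixes X W :: "(real^'n::{finite,linorder}) set"
  assumes "subspace X" "subspace W" "dim X + dim W = CARD('n)"
  shows "direct_sum_full X W \<longleftrightarrow> X \<inter> W = {0}"
proof
  assume i0: "X \<inter> W = {0}"
  define S' where "S' = {x + y |x y. x \<in> X \<and> y \<in> W}"
  have "dim S' + dim (X \<inter> W) = dim X + dim W"
    unfolding S'_def by (rule dim_sums_Int[OF assms(1,2)])
  hence d: "dim S' = CARD('n)" using assms(3) i0 by simp
  have sub: "subspace S'" unfolding S'_def by (rule subspace_sums[OF assms(1,2)])
  have "DIM((real,'n) Finite_Cartesian_Product.vec) = CARD('n)" by simp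
  hence "dim S' = DIM((real,'n) Finite_Cartesian_Product.vec)" using d by simp
  hence "span S' = UNIV" by (simp only: dim_eq_full)
  moreover have "span S' = S'" using sub by (simp only: span_eq_iff)
  ultimately have "S' = UNIV" by simp
  thus "direct_sum_full X W" using i0 unfolding direct_sum_full_def S'_def by simp
qed (simp add: direct_sum_full_def)



lemma pluecker_basis:
  fixes W :: "(real^'n::{finite,linorder}) set"
  assumes "subspace W"
  shows "\<exists>bs. length bs = dim W \<and> distinct bs \<and> independent (set bs) \<and> span (set bs) = W \<and>
     pluecker W = (\<lambda>I. if card I = dim W then minor bs I else 0)"
proof -
  let ?P = "\<lambda>bs. length bs = dim W \<and> distinct bs \<and> independent (set bs) \<and> span (set bs) = W"
  have "?P (SOME bs. ?P bs)" using someI_ex[OF basis_list[OF assms]] .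
  thus ?thesis unfolding pluecker_def Let_def by blast
qed

lemma pos_idx: "pos i = idx UNIV i + 1"
proof -
  have "{j. j \<le> i} = insert i {t\<in>UNIV. t < i}" by auto
  thus ?thesis unfolding pos_def idx_def by simp
qed

lemma sign_pos:
  fixes I :: "'n::{finite,linorder} set"
  assumes "card I = j"
  shows "(-1::real) ^ (j * (j + 1) div 2 + (\<Sum>i\<in>I. pos i)) = (-1)^(lapl_exp UNIV I)"
proof -
  have c: "j * (j + 1) div 2 = j * (j - 1) div 2 + j"
  proof -
    have "j * (j + 1) = j * (j - 1) + 2 * j" by (cases j) (simp_all add: algebra_simps)
    thus ?thesis by simp
  qed
  have "(\<Sum>i\<in>I. pos i) = (\<Sum>i\<in>I. idx UNIV i) + j" unfolding pos_idx sum.distrib using assms by simp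
  hence "j * (j + 1) div 2 + (\<Sum>i\<in>I. pos i) = lapl_exp UNIV I + 2 * j"
    unfolding lapl_exp_def c using assms by simp
  thus ?thesis by (simp add: power_add power_mult)
qed

lemma key_transversal:
  fixes A :: "(real^'n::{finite,linorder}) set set" and W X :: "(real^'n::{finite,linorder}) set"
  assumes "hyperplane_arrangement A" "X \<in> Lj A j" "subspace W" "dim W = j"
    and "pluecker W \<in> coord_space j"
  shows "direct_sum_full X W \<longleftrightarrow> pluecker W \<notin> HX X"
proof -
  let ?n = "CARD('n)"
  have XL: "X \<in> int_lattice UNIV A" "codim X = j" using assms(2) unfolding Lj_def by auto
  have sX: "subspace X" by (rule subspace_lattice[OF assms(1) XL(1)])
  have "dim X \<le> ?n" using dim_subset_UNIV[of X] by simp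
  hence dX: "dim X = ?n - j" "j \<le> ?n" using XL(2) unfolding codim_def by auto
  obtain ws where ws: "length ws = dim W" "distinct ws" "independent (set ws)" "span (set ws) = W"
    "pluecker W = (\<lambda>I. if card I = dim W then minor ws I else 0)" using pluecker_basis[OF assms(3)] by blast
  obtain xs where xs: "length xs = dim X" "distinct xs" "independent (set xs)" "span (set xs) = X"
    "pluecker X = (\<lambda>I. if card I = dim X then minor xs I else 0)" using pluecker_basis[OF sX] by blast
  have len: "length (ws @ xs) = ?n" using ws(1) xs(1) dX assms(4) by simp
  have "pluecker W \<in> HX X \<longleftrightarrow>
     (\<Sum>I | card I = j. (-1::real) ^ (j * (j + 1) div 2 + (\<Sum>i\<in>I. pos i)) * pluecker X (UNIV - I) * pluecker W I) = 0"
    unfolding HX_def Let_def XL(2) using assms(5) by simp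
  also have "(\<Sum>I | card I = j. (-1::real) ^ (j * (j + 1) div 2 + (\<Sum>i\<in>I. pos i)) * pluecker X (UNIV - I) * pluecker W I)
     = (\<Sum>I\<in>{I. I \<subseteq> UNIV \<and> card I = length ws}. (-1)^(lapl_exp UNIV I) * Determinant.det (Mt ws I) * Determinant.det (Mt xs (UNIV - I)))"
  proof (rule sum.cong)
    fix I :: "'n set" assume "I \<in> {I. I \<subseteq> UNIV \<and> card I = length ws}"
    hence cI: "card I = j" using ws(1) assms(4) by simp
    have "card (UNIV - I) = ?n - j" using cI by (simp add: card_Diff_subset)
    hence "pluecker X (UNIV - I) = minor xs (UNIV - I)" using xs(5) dX by simp
    moreover have "pluecker W I = minor ws I" using ws(5) cI assms(4) by simp
    ultimately show "(-1::real) ^ (j * (j + 1) div 2 + (\<Sum>i\<in>I. pos i)) * pluecker X (UNIV - I) * pluecker W I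
      = (-1)^(lapl_exp UNIV I) * Determinant.det (Mt ws I) * Determinant.det (Mt xs (UNIV - I))"
      using sign_pos[OF cI] by (simp add: minor_det)
  qed (use ws(1) assms(4) in simp)
  also have "\<dots> = Determinant.det (Mt (ws @ xs) UNIV)"
    by (rule laplace[symmetric]) (use len in simp)
  finally have "pluecker W \<in> HX X \<longleftrightarrow> Determinant.det (Mt (ws @ xs) UNIV) = 0" .
  also have "\<dots> \<longleftrightarrow> (\<exists>v. (\<exists>r<length (ws@xs). v r \<noteq> 0) \<and> (\<Sum>r<length (ws@xs). v r *\<^sub>R (ws@xs)!r) = 0)"
    by (rule det_Mt_zero_iff[OF len])
  also have "\<dots> \<longleftrightarrow> \<not> (X \<inter> W = {0})"
    using transversal_iff[OF ws(2,3) xs(2,3)] ws(4) xs(4) by simp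
  also have "\<dots> \<longleftrightarrow> \<not> direct_sum_full X W"
    using direct_sum_iff[OF sX assms(3)] dX assms(4) by simp
  finally show ?thesis by blast
qed

lemma main_part:
  fixes A :: "(real^'n::{finite,linorder}) set set" and k i :: nat
    and P :: "('n set \<Rightarrow> real) set" and U :: "(real^'n::{finite,linorder}) set"
  assumes "hyperplane_arrangement A"
    and "i \<le> k"
    and "P \<in> int_lattice (coord_space (k - i)) (arr_j A (k - i))"
    and "U \<in> S_set A k i P"
  shows "LU A k U = {X \<in> Lj A (k - i). \<not> P \<subseteq> HX X} \<and>
         {X \<in> Lj A (k - i). pluecker (Wsp A U) \<in> HX X} = {X \<in> Lj A (k - i). P \<subseteq> HX X}"
proof -
  let ?j = "k - i"
  let ?W = "Wsp A U"
  let ?V = "coord_space ?j"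
  let ?B = "arr_j A ?j"
  have U: "subspace U" "dim U = k" "dim (U \<inter> Tset A) = i" "pluecker ?W \<in> flat_interior ?V ?B P"
    using assms(4) unfolding S_set_def by auto
  have sW: "subspace ?W" using Wsp_props[OF assms(1) U(1)] by simp
  have dW: "dim ?W = ?j" using Wsp_props[OF assms(1) U(1)] U by simp
  obtain S0 where S0: "S0 \<subseteq> ?B" "P = ?V \<inter> \<Inter>S0" using assms(3) unfolding int_lattice_def by blast
  have pP: "pluecker ?W \<in> P" using U(4) unfolding flat_interior_def by simp
  have PV: "P \<subseteq> ?V" using S0 by simp
  have claim2: "pluecker ?W \<in> HX X \<longleftrightarrow> P \<subseteq> HX X" if X: "X \<in> Lj A ?j" for X
  proof
    assume h: "pluecker ?W \<in> HX X"
    show "P \<subseteq> HX X"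
    proof (rule ccontr)
      assume n: "\<not> P \<subseteq> HX X"
      have "HX X \<in> ?B" using X unfolding arr_j_def by simp
      hence "?V \<inter> \<Inter>(insert (HX X) S0) \<in> int_lattice ?V ?B" using S0 unfolding int_lattice_def by blast
      moreover have "?V \<inter> \<Inter>(insert (HX X) S0) = P \<inter> HX X" using S0 by auto
      ultimately have "P \<inter> HX X \<in> int_lattice ?V ?B" by simp
      moreover have "P \<inter> HX X \<subset> P" using n by auto
      moreover have "pluecker ?W \<in> P \<inter> HX X" using pP h by simp
      ultimately show False using U(4) unfolding flat_interior_def by blast
    qed
  next
    assume "P \<subseteq> HX X" thus "pluecker ?W \<in> HX X" using pP by auto
  qed
  have key: "direct_sum_full X ?W \<longleftrightarrow> \<not> P \<subseteq> HX X" if X: "X \<in> Lj A ?j" for X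
    using key_transversal[OF assms(1) X sW dW] PV pP claim2[OF X] by blast
  have "LU A k U = {X \<in> Lj A ?j. direct_sum_full X ?W}" unfolding LU_def U(3) ..
  also have "\<dots> = {X \<in> Lj A ?j. \<not> P \<subseteq> HX X}" using key by blast
  finally show ?thesis using claim2 by blast
qed

theorem mainTheorem8:
  fixes A :: "(real^'n::{finite,linorder}) set set" and k i :: nat
    and P :: "('n set \<Rightarrow> real) set" and U :: "(real^'n::{finite,linorder}) set"
  assumes "hyperplane_arrangement A"
    and "i \<le> k"
    and "P \<in> int_lattice (coord_space (k - i)) (arr_j A (k - i))"
    and "U \<in> S_set A k i P"
  shows "LU A k U = {X \<in> Lj A (k - i). \<not> P \<subseteq> HX X} \<and>
         {X \<in> Lj A (k - i). pluecker (Wsp A U) \<in> HX X} = {X \<in> Lj A (k - i). P \<subseteq> HX X} \<and>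
         (\<forall>U1\<in>S_set A k i P. \<forall>U2\<in>S_set A k i P. LU A k U1 = LU A k U2)"
  using main_part[OF assms] main_part[OF assms(1-3)] by blast


end
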